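(* Let $N$ be a finite set, $r\notin N$, $V=N\cup\{r\}$, and let $G=(V,E)$ be the complete graph on $V$ with edge weights $w:E\to\mathbb{R}$ taking the distinct values $w_1<\dots<w_k$. Then the graphs $G_i$, $i<k$, contain no bad holes and no bad induced diamonds if and only if the graphs $G_i$, $i<k$, contain no violated cycles.
   Context: $E_i=\{e\in E:w(e)\le w_i\}$, $G_i=(V,E_i)$. A hole is an induced cycle with at least four vertices; a hole in $G_i$ is bad if it contains a vertex $x\neq r$ with $rx\notin E_i$. A diamond is $K_4$ minus one edge; its tips are its two vertices of degree 2. For a cycle $C$ and a chord $f=xy$ of $C$, with $P_1,P_2$ the two $x$-$y$ paths of $C$, $f$ covers $C$ if $w(f)\ge w(e)$ for all $e\in E(P_1)$ or for all $e\in E(P_2)$; $C$ is well-covered if covered by all its chords (chords taken in the graph $G_i$ under consideration). An induced diamond in $G_i$ is bad if its Hamiltonian cycle is well-covered and at least one tip $x\ne r$ satisfies $rx\notin E_i$. A violated cycle in $G_i$ is a well-covered cycle of $G_i$ that contains two vertices non-adjacent in $G_i$ and contains a vertex $x\ne r$ with $rx\notin E_i$. *)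

theory Defs
  imports Complex_Main
begin

text \<open>Vertices have type 'a; the edge weight of the complete graph on V is a
symmetric function w. G_i is given by its adjacency relation.\<close>

definition weight_values :: "'a set \<Rightarrow> ('a \<Rightarrow> 'a \<Rightarrow> real) \<Rightarrow> real set" where
  "weight_values V w = {w x y | x y. x \<in> V \<and> y \<in> V \<and> x \<noteq> y}"

text \<open>w_i, 1-based: the i-th smallest distinct weight value.\<close>
definition wval :: "'a set \<Rightarrow> ('a \<Rightarrow> 'a \<Rightarrow> real) \<Rightarrow> nat \<Rightarrow> real" where
  "wval V w i = sorted_list_of_set (weight_values V w) ! (i - 1)"

definition Gadj :: "'a set \<Rightarrow> ('a \<Rightarrow> 'a \<Rightarrow> real) \<Rightarrow> nat \<Rightarrow> 'a \<Rightarrow> 'a \<Rightarrow> bool" where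
  "Gadj V w i x y \<longleftrightarrow> x \<in> V \<and> y \<in> V \<and> x \<noteq> y \<and> w x y \<le> wval V w i"

definition is_cycle :: "('a \<Rightarrow> 'a \<Rightarrow> bool) \<Rightarrow> 'a list \<Rightarrow> bool" where
  "is_cycle A xs \<longleftrightarrow> length xs \<ge> 3 \<and> distinct xs \<and>
     (\<forall>j < length xs. A (xs ! j) (xs ! ((j + 1) mod length xs)))"

definition is_hole :: "('a \<Rightarrow> 'a \<Rightarrow> bool) \<Rightarrow> 'a list \<Rightarrow> bool" where
  "is_hole A xs \<longleftrightarrow> is_cycle A xs \<and> length xs \<ge> 4 \<and>
     (\<forall>j k. j < length xs \<and> k < length xs \<and> A (xs ! j) (xs ! k) \<longrightarrow>
        k = (j + 1) mod length xs \<or> j = (k + 1) mod length xs)"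

definition is_chord :: "('a \<Rightarrow> 'a \<Rightarrow> bool) \<Rightarrow> 'a list \<Rightarrow> nat \<Rightarrow> nat \<Rightarrow> bool" where
  "is_chord A xs a b \<longleftrightarrow> a < b \<and> b < length xs \<and> A (xs ! a) (xs ! b) \<and>
     b \<noteq> a + 1 \<and> \<not> (a = 0 \<and> b = length xs - 1)"

definition covers :: "('a \<Rightarrow> 'a \<Rightarrow> real) \<Rightarrow> 'a list \<Rightarrow> nat \<Rightarrow> nat \<Rightarrow> bool" where
  "covers w xs a b \<longleftrightarrow>
     (\<forall>j. a \<le> j \<and> j < b \<longrightarrow> w (xs ! j) (xs ! (j + 1)) \<le> w (xs ! a) (xs ! b)) \<or>
     (\<forall>j. (j < a \<or> b \<le> j) \<and> j < length xs \<longrightarrow>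
        w (xs ! j) (xs ! ((j + 1) mod length xs)) \<le> w (xs ! a) (xs ! b))"

definition well_covered :: "('a \<Rightarrow> 'a \<Rightarrow> bool) \<Rightarrow> ('a \<Rightarrow> 'a \<Rightarrow> real) \<Rightarrow> 'a list \<Rightarrow> bool" where
  "well_covered A w xs \<longleftrightarrow> (\<forall>a b. is_chord A xs a b \<longrightarrow> covers w xs a b)"

definition bad_hole :: "('a \<Rightarrow> 'a \<Rightarrow> bool) \<Rightarrow> 'a \<Rightarrow> 'a list \<Rightarrow> bool" where
  "bad_hole A r xs \<longleftrightarrow> is_hole A xs \<and> (\<exists>x \<in> set xs. x \<noteq> r \<and> \<not> A r x)"

text \<open>Induced diamond with tips a, c and Hamiltonian cycle a-b-c-d-a.\<close>
definition induced_diamond :: "('a \<Rightarrow> 'a \<Rightarrow> bool) \<Rightarrow> 'a \<Rightarrow> 'a \<Rightarrow> 'a \<Rightarrow> 'a \<Rightarrow> bool" where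
  "induced_diamond A a b c d \<longleftrightarrow> distinct [a, b, c, d] \<and>
     A a b \<and> A b c \<and> A c d \<and> A d a \<and> A b d \<and> \<not> A a c"

definition bad_diamond :: "('a \<Rightarrow> 'a \<Rightarrow> bool) \<Rightarrow> ('a \<Rightarrow> 'a \<Rightarrow> real) \<Rightarrow> 'a \<Rightarrow> 'a \<Rightarrow> 'a \<Rightarrow> 'a \<Rightarrow> 'a \<Rightarrow> bool" where
  "bad_diamond A w r a b c d \<longleftrightarrow> induced_diamond A a b c d \<and> well_covered A w [a, b, c, d] \<and>
     ((a \<noteq> r \<and> \<not> A r a) \<or> (c \<noteq> r \<and> \<not> A r c))"

definition violated_cycle :: "('a \<Rightarrow> 'a \<Rightarrow> bool) \<Rightarrow> ('a \<Rightarrow> 'a \<Rightarrow> real) \<Rightarrow> 'a \<Rightarrow> 'a list \<Rightarrow> bool" where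
  "violated_cycle A w r xs \<longleftrightarrow> is_cycle A xs \<and> well_covered A w xs \<and>
     (\<exists>x \<in> set xs. \<exists>y \<in> set xs. x \<noteq> y \<and> \<not> A x y) \<and>
     (\<exists>x \<in> set xs. x \<noteq> r \<and> \<not> A r x)"

end

theory Submission
  imports Defs
begin

definition ew :: "('a \<Rightarrow> 'a \<Rightarrow> real) \<Rightarrow> 'a list \<Rightarrow> nat \<Rightarrow> real" where
  "ew w xs j = w (xs ! j) (xs ! (Suc j mod length xs))"

lemma covers_alt:
  assumes "b < length xs"
  shows "covers w xs a b \<longleftrightarrow>
    (\<forall>j. a \<le> j \<and> j < b \<longrightarrow> ew w xs j \<le> w (xs!a) (xs!b)) \<or>
    (\<forall>j. (j < a \<or> b \<le> j) \<and> j < length xs \<longrightarrow> ew w xs j \<le> w (xs!a) (xs!b))"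
proof -
  have "\<And>j. j < b \<Longrightarrow> Suc j mod length xs = Suc j" using assms by simp
  then show ?thesis unfolding covers_def ew_def by auto
qed

lemma ew_rotate:
  assumes "j < length xs"
  shows "ew w (rotate n xs) j = ew w xs ((n + j) mod length xs)"
proof -
  have L: "length xs > 0" using assms by auto
  have "Suc j mod length xs < length xs" using L by simp
  then have "rotate n xs ! (Suc j mod length xs) = xs ! ((n + Suc j mod length xs) mod length xs)"
    by (simp add: nth_rotate)
  also have "(n + Suc j mod length xs) mod length xs = Suc ((n + j) mod length xs) mod length xs"
    by (simp add: mod_simps)
  finally show ?thesis unfolding ew_def using assms by (simp add: nth_rotate)
qed

lemma cycle_rotate:
  assumes "is_cycle A xs" shows "is_cycle A (rotate n xs)"
proof -
  have L: "length xs > 0" using assms unfolding is_cycle_def by auto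
  { fix j assume j: "j < length xs"
    have "(n + j) mod length xs < length xs" using L by simp
    then have "A (xs ! ((n + j) mod length xs)) (xs ! (Suc ((n + j) mod length xs) mod length xs))"
      using assms unfolding is_cycle_def by auto
    moreover have "Suc ((n + j) mod length xs) mod length xs = (n + Suc j mod length xs) mod length xs"
      by (simp add: mod_simps)
    ultimately have "A (rotate n xs ! j) (rotate n xs ! (Suc j mod length xs))"
      using j L by (simp add: nth_rotate)
  }
  then show ?thesis using assms unfolding is_cycle_def by simp
qed

lemma wc_rotate1:
  assumes symA: "\<And>x y. A x y \<Longrightarrow> A y x" and symw: "\<And>x y. w x y = w y x"
    and wc: "well_covered A w xs"
  shows "well_covered A w (rotate1 xs)"
  unfolding well_covered_def
proof (intro allI impI)
  fix a b assume ch: "is_chord A (rotate1 xs) a b"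
  let ?L = "length xs"
  let ?ys = "rotate1 xs"
  have ab: "a < b" "b < ?L" "A (?ys!a) (?ys!b)" "b \<noteq> a + 1" "\<not> (a = 0 \<and> b = ?L - 1)"
    using ch unfolding is_chord_def by auto
  have ysn: "\<And>j. j < ?L \<Longrightarrow> ?ys ! j = xs ! (Suc j mod ?L)" by (simp add: nth_rotate1)
  have ewr: "\<And>j. j < ?L \<Longrightarrow> ew w ?ys j = ew w xs (Suc j mod ?L)"
    using ew_rotate[of _ xs w 1] by (simp add: rotate1_rotate_swap)
  show "covers w ?ys a b"
  proof (cases "Suc b < ?L")
    case True
    have e1: "?ys!a = xs!(Suc a)" "?ys!b = xs!(Suc b)" using ab True ysn by auto
    have "is_chord A xs (Suc a) (Suc b)" using ab True e1 unfolding is_chord_def by auto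
    then have "covers w xs (Suc a) (Suc b)" using wc unfolding well_covered_def by auto
    then have cv: "(\<forall>j. Suc a \<le> j \<and> j < Suc b \<longrightarrow> ew w xs j \<le> w (xs!Suc a) (xs!Suc b)) \<or>
      (\<forall>j. (j < Suc a \<or> Suc b \<le> j) \<and> j < ?L \<longrightarrow> ew w xs j \<le> w (xs!Suc a) (xs!Suc b))"
      using covers_alt[of "Suc b" xs w "Suc a"] True by simp
    show ?thesis
    proof -
      from cv show ?thesis
      proof
        assume c1: "\<forall>j. Suc a \<le> j \<and> j < Suc b \<longrightarrow> ew w xs j \<le> w (xs!Suc a) (xs!Suc b)"
        { fix j assume "a \<le> j" "j < b"
          then have "ew w ?ys j = ew w xs (Suc j)" using ewr ab True by simp
          then have "ew w ?ys j \<le> w (?ys!a) (?ys!b)" using c1 e1 \<open>a \<le> j\<close> \<open>j < b\<close> by simp }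
        then show ?thesis using covers_alt[of b ?ys w a] ab by simp
      next
        assume c2: "\<forall>j. (j < Suc a \<or> Suc b \<le> j) \<and> j < ?L \<longrightarrow> ew w xs j \<le> w (xs!Suc a) (xs!Suc b)"
        { fix j assume j: "(j < a \<or> b \<le> j) \<and> j < ?L"
          have "ew w ?ys j \<le> w (?ys!a) (?ys!b)"
          proof (cases "Suc j < ?L")
            case True
            then show ?thesis using ewr j c2 e1 by auto
          next
            case False
            then have "Suc j = ?L" using j by simp
            then have "Suc j mod ?L = 0" by simp
            then show ?thesis using ewr j c2 e1 by auto
          qed }
        then show ?thesis using covers_alt[of b ?ys w a] ab by simp
      qed
    qed
  next
    case False
    then have bL: "b = ?L - 1" using ab by simp
    have a1: "a \<ge> 1" using ab bL by auto
    have sa: "Suc a < ?L - 1" using ab bL by auto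
    have "Suc b = ?L" using bL ab by simp
    then have e1: "?ys!a = xs!(Suc a)" "?ys!b = xs!0" using ab ysn sa by auto
    have "is_chord A xs 0 (Suc a)" using ab e1 a1 sa symA unfolding is_chord_def by auto
    then have "covers w xs 0 (Suc a)" using wc unfolding well_covered_def by auto
    then have cv: "(\<forall>j. j < Suc a \<longrightarrow> ew w xs j \<le> w (xs!0) (xs!Suc a)) \<or>
      (\<forall>j. Suc a \<le> j \<and> j < ?L \<longrightarrow> ew w xs j \<le> w (xs!0) (xs!Suc a))"
      using covers_alt[of "Suc a" xs w 0] sa by auto
    have ww: "w (?ys!a) (?ys!b) = w (xs!0) (xs!Suc a)" using e1 symw by simp
    from cv show ?thesis
    proof
      assume c1: "\<forall>j. j < Suc a \<longrightarrow> ew w xs j \<le> w (xs!0) (xs!Suc a)"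
      { fix j assume j: "(j < a \<or> b \<le> j) \<and> j < ?L"
        have "ew w ?ys j \<le> w (?ys!a) (?ys!b)"
        proof (cases "j < a")
          case True
          then show ?thesis using ewr j c1 ww sa by auto
        next
          case False
          then have "j = ?L - 1" using j bL by auto
          then have "Suc j = ?L" using j ab by simp
          then have "Suc j mod ?L = 0" by simp
          then show ?thesis using ewr j c1 ww by auto
        qed }
      then show ?thesis using covers_alt[of b ?ys w a] ab by simp
    next
      assume c2: "\<forall>j. Suc a \<le> j \<and> j < ?L \<longrightarrow> ew w xs j \<le> w (xs!0) (xs!Suc a)"
      { fix j assume "a \<le> j" "j < b"
        then have "ew w ?ys j = ew w xs (Suc j)" using ewr ab by simp
        then have "ew w ?ys j \<le> w (?ys!a) (?ys!b)" using c2 ww \<open>a \<le> j\<close> \<open>j < b\<close> bL by simp }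
      then show ?thesis using covers_alt[of b ?ys w a] ab by simp
    qed
  qed
qed

lemma wc_rotate:
  assumes symA: "\<And>x y. A x y \<Longrightarrow> A y x" and symw: "\<And>x y. w x y = w y x"
    and wc: "well_covered A w xs"
  shows "well_covered A w (rotate n xs)"
  by (induction n) (auto intro: wc_rotate1[OF symA symw] simp: wc)

lemma violated_rotate:
  assumes symA: "\<And>x y. A x y \<Longrightarrow> A y x" and symw: "\<And>x y. w x y = w y x"
    and "violated_cycle A w r xs"
  shows "violated_cycle A w r (rotate n xs)"
  using assms cycle_rotate wc_rotate unfolding violated_cycle_def by (metis set_rotate)



lemma prefix_cycle:
  assumes cyc: "is_cycle A E" and m: "2 \<le> m" "m < length E" and cl: "A (E!m) (E!0)"
  shows "is_cycle A (take (Suc m) E)"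
proof -
  have d: "distinct (take (Suc m) E)" using cyc unfolding is_cycle_def by simp
  have len: "length (take (Suc m) E) = Suc m" using m by simp
  { fix j assume j: "j < Suc m"
    have "A (take (Suc m) E ! j) (take (Suc m) E ! (Suc j mod Suc m))"
    proof (cases "j < m")
      case True
      then have e1: "Suc j mod length E = Suc j" "Suc j mod Suc m = Suc j" using m by auto
      have jl: "j < length E" using True m by simp
      have "\<forall>j<length E. A (E!j) (E!(Suc j mod length E))" using cyc unfolding is_cycle_def by simp
      then have "A (E!j) (E!(Suc j mod length E))" using jl by simp
      then show ?thesis using e1 True m by (auto simp: nth_take)
    next
      case False
      then have "j = m" using j by simp
      then show ?thesis using cl m by (simp add: nth_take)
    qed }
  then show ?thesis unfolding is_cycle_def using d len m by simp
qed

lemma ew_take: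
  assumes "j < m" "m < length E"
  shows "ew w (take (Suc m) E) j = ew w E j"
  using assms unfolding ew_def by (simp add: nth_take)

lemma ew_take_last:
  assumes "m < length E"
  shows "ew w (take (Suc m) E) m = w (E!m) (E!0)"
  using assms unfolding ew_def by (simp add: nth_take)

lemma S_prefix:
  assumes m: "2 \<le> m" "m + 2 \<le> length E"
    and hyp: "\<And>c d. is_chord A' (take (Suc m) E) c d \<Longrightarrow>
        (\<forall>j. c \<le> j \<and> j < d \<longrightarrow> ew w E j \<le> w (E!c) (E!d)) \<or>
        ((\<forall>j. (j < c \<or> d \<le> j) \<and> j < length E \<longrightarrow> ew w E j \<le> w (E!c) (E!d)) \<and>
          w (E!m) (E!0) \<le> w (E!c) (E!d))"
  shows "well_covered A' w (take (Suc m) E)"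
  unfolding well_covered_def
proof (intro allI impI)
  fix c d assume ch: "is_chord A' (take (Suc m) E) c d"
  let ?T = "take (Suc m) E"
  have cd: "c < d" "d < Suc m" using ch m unfolding is_chord_def by auto
  have Tn: "?T ! c = E ! c" "?T ! d = E ! d" using cd m by (auto simp: nth_take)
  have lenT: "length ?T = Suc m" using m by simp
  from hyp[OF ch] show "covers w ?T c d"
  proof
    assume c1: "\<forall>j. c \<le> j \<and> j < d \<longrightarrow> ew w E j \<le> w (E!c) (E!d)"
    { fix j assume j: "c \<le> j" "j < d"
      then have "ew w ?T j = ew w E j" using ew_take[of j m E w] cd m by simp
      then have "ew w ?T j \<le> w (?T!c) (?T!d)" using c1 j Tn by simp }
    then show ?thesis using covers_alt[of d ?T w c] cd lenT by simp
  next
    assume c2: "(\<forall>j. (j < c \<or> d \<le> j) \<and> j < length E \<longrightarrow> ew w E j \<le> w (E!c) (E!d)) \<and>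
          w (E!m) (E!0) \<le> w (E!c) (E!d)"
    { fix j assume j: "(j < c \<or> d \<le> j) \<and> j < length ?T"
      have "ew w ?T j \<le> w (?T!c) (?T!d)"
      proof (cases "j < m")
        case True
        then have "ew w ?T j = ew w E j" using ew_take[of j m E w] m by simp
        then show ?thesis using c2 j Tn True m by auto
      next
        case False
        then have "j = m" using j lenT by simp
        then show ?thesis using ew_take_last[of m E w] c2 Tn m by simp
      qed }
    then show ?thesis using covers_alt[of d ?T w c] cd lenT by simp
  qed
qed

lemma GS_prefix:
  assumes wc: "well_covered A w E" and AA: "\<And>x y. A' x y \<Longrightarrow> A x y"
    and symw: "\<And>x y. w x y = w y x"
    and m: "2 \<le> m" "m + 2 \<le> length E"
    and heavy: "m \<le> j0" "j0 < length E" "w (E!0) (E!m) \<le> ew w E j0"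
  shows "well_covered A' w (take (Suc m) E)"
proof (rule S_prefix[OF m])
  fix c d assume ch: "is_chord A' (take (Suc m) E) c d"
  have cd: "c < d" "d < Suc m" "A' (E!c) (E!d)" "d \<noteq> c + 1"
    using ch m unfolding is_chord_def by (auto simp: nth_take)
  have "is_chord A E c d" using cd AA m unfolding is_chord_def by auto
  then have "covers w E c d" using wc unfolding well_covered_def by auto
  then have cv: "(\<forall>j. c \<le> j \<and> j < d \<longrightarrow> ew w E j \<le> w (E!c) (E!d)) \<or>
    (\<forall>j. (j < c \<or> d \<le> j) \<and> j < length E \<longrightarrow> ew w E j \<le> w (E!c) (E!d))"
    using covers_alt[of d E w c] cd m by simp
  show "(\<forall>j. c \<le> j \<and> j < d \<longrightarrow> ew w E j \<le> w (E!c) (E!d)) \<or>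
        ((\<forall>j. (j < c \<or> d \<le> j) \<and> j < length E \<longrightarrow> ew w E j \<le> w (E!c) (E!d)) \<and>
          w (E!m) (E!0) \<le> w (E!c) (E!d))"
  proof (cases "\<forall>j. c \<le> j \<and> j < d \<longrightarrow> ew w E j \<le> w (E!c) (E!d)")
    case True then show ?thesis by simp
  next
    case False
    then have c2: "\<forall>j. (j < c \<or> d \<le> j) \<and> j < length E \<longrightarrow> ew w E j \<le> w (E!c) (E!d)"
      using cv False by argo
    then have "ew w E j0 \<le> w (E!c) (E!d)" using heavy cd by auto
    then have "w (E!m) (E!0) \<le> w (E!c) (E!d)" using heavy symw by (metis order.trans)
    then show ?thesis using c2 by simp
  qed
qed

lemma wc_mono:
  assumes "\<And>x y. A' x y \<Longrightarrow> A x y" "well_covered A w xs"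
  shows "well_covered A' w xs"
  using assms unfolding well_covered_def is_chord_def by blast

lemma inner_cycle:
  assumes cyc: "is_cycle A D" and ch: "is_chord A D a b" and symA: "\<And>x y. A x y \<Longrightarrow> A y x"
  shows "is_cycle A (take (Suc (b - a)) (rotate a D))"
    "length (take (Suc (b - a)) (rotate a D)) < length D"
    "\<And>t. a \<le> t \<Longrightarrow> t \<le> b \<Longrightarrow> D ! t \<in> set (take (Suc (b - a)) (rotate a D))"
    "set (take (Suc (b - a)) (rotate a D)) \<subseteq> set D"
proof -
  let ?L = "length D"
  have ab: "a < b" "b < ?L" "A (D!a) (D!b)" "b \<noteq> a + 1" "\<not> (a = 0 \<and> b = ?L - 1)"
    using ch unfolding is_chord_def by auto
  let ?E = "rotate a D"
  have En: "\<And>j. j \<le> b - a \<Longrightarrow> ?E ! j = D ! (a + j)" using ab by (simp add: nth_rotate)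
  show "is_cycle A (take (Suc (b - a)) ?E)"
    by (rule prefix_cycle) (use cycle_rotate[OF cyc] ab En symA in auto)
  show "length (take (Suc (b - a)) ?E) < ?L" using ab by auto
  show "set (take (Suc (b - a)) ?E) \<subseteq> set D" by (metis set_rotate set_take_subset)
  fix t assume t: "a \<le> t" "t \<le> b"
  have "take (Suc (b - a)) ?E ! (t - a) = D ! t" using En t ab by (simp add: nth_take)
  moreover have "t - a < length (take (Suc (b - a)) ?E)" using t ab by simp
  ultimately show "D ! t \<in> set (take (Suc (b - a)) ?E)" by (metis nth_mem)
qed

lemma outer_cycle:
  assumes cyc: "is_cycle A D" and ch: "is_chord A D a b" and symA: "\<And>x y. A x y \<Longrightarrow> A y x"
  shows "is_cycle A (take (Suc (length D - b + a)) (rotate b D))"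
    "length (take (Suc (length D - b + a)) (rotate b D)) < length D"
    "\<And>t. t < length D \<Longrightarrow> t \<le> a \<or> b \<le> t \<Longrightarrow> D ! t \<in> set (take (Suc (length D - b + a)) (rotate b D))"
    "set (take (Suc (length D - b + a)) (rotate b D)) \<subseteq> set D"
proof -
  let ?L = "length D"
  have ab: "a < b" "b < ?L" "A (D!a) (D!b)" "b \<noteq> a + 1" "\<not> (a = 0 \<and> b = ?L - 1)"
    using ch unfolding is_chord_def by auto
  let ?E = "rotate b D"
  let ?m = "?L - b + a"
  have m: "2 \<le> ?m" "?m < ?L" using ab by auto
  have Em: "?E ! ?m = D ! a"
  proof -
    have "?E ! ?m = D ! ((b + ?m) mod ?L)" using m by (simp add: nth_rotate)
    also have "b + ?m = ?L + a" using ab by simp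
    finally show ?thesis using ab by simp
  qed
  have L0: "0 < ?L" using ab(2) by linarith
  have "D \<noteq> []" using ab(2) by (metis list.size(3) not_less0)
  then have E0: "?E ! 0 = D ! b" using ab by (simp add: nth_rotate)
  show "is_cycle A (take (Suc ?m) ?E)"
    by (rule prefix_cycle) (use cycle_rotate[OF cyc] m Em E0 ab in auto)
  show "length (take (Suc ?m) ?E) < ?L" using m ab by auto
  show "set (take (Suc ?m) ?E) \<subseteq> set D" by (metis set_rotate set_take_subset)
  fix t assume t: "t < ?L" "t \<le> a \<or> b \<le> t"
  show "D ! t \<in> set (take (Suc ?m) ?E)"
  proof (cases "b \<le> t")
    case True
    have "?E ! (t - b) = D ! ((b + (t - b)) mod ?L)" using t by (simp add: nth_rotate)
    then have "take (Suc ?m) ?E ! (t - b) = D ! t" using True t m by (simp add: nth_take)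
    moreover have "t - b < length (take (Suc ?m) ?E)" using t m True by simp
    ultimately show ?thesis by (metis nth_mem)
  next
    case False
    then have ta: "t \<le> a" using t by simp
    have "?L - b + t < ?L" using ta ab by simp
    then have "?E ! (?L - b + t) = D ! ((b + (?L - b + t)) mod ?L)" by (simp add: nth_rotate)
    also have "b + (?L - b + t) = ?L + t" using ab by simp
    finally have "take (Suc ?m) ?E ! (?L - b + t) = D ! t" using ta t ab by (simp add: nth_take)
    moreover have "?L - b + t < length (take (Suc ?m) ?E)" using ta ab by simp
    ultimately show ?thesis by (metis nth_mem)
  qed
qed

lemma cyc3_all:
  assumes "is_cycle A xs" "length xs = 3" "\<And>x y. A x y \<Longrightarrow> A y x"
    "x \<in> set xs" "y \<in> set xs" "x \<noteq> y"
  shows "A x y"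
proof -
  have h: "\<forall>j<3. A (xs ! j) (xs ! (Suc j mod 3))" using assms(1,2) unfolding is_cycle_def by auto
  have "A (xs!0) (xs!(Suc 0 mod 3))" "A (xs!1) (xs!(Suc 1 mod 3))" "A (xs!2) (xs!(Suc 2 mod 3))"
    using h[rule_format, of 0] h[rule_format, of 1] h[rule_format, of 2] by simp_all
  then have e: "A (xs!0) (xs!1)" "A (xs!1) (xs!2)" "A (xs!2) (xs!0)" by (auto simp: numeral_2_eq_2)
  obtain i j where ij: "i < 3" "j < 3" "x = xs!i" "y = xs!j" using assms by (metis in_set_conv_nth)
  have "i \<noteq> j" using ij assms(6) by auto
  then show ?thesis using ij e assms(3)
    by (auto simp: less_Suc_eq numeral_3_eq_3 numeral_2_eq_2)
qed

lemma not_hole_chord: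
  assumes cyc: "is_cycle A D" and nh: "\<not> is_hole A D" and L4: "length D \<ge> 4"
    and symA: "\<And>x y. A x y \<Longrightarrow> A y x" and irr: "\<And>x. \<not> A x x"
  shows "\<exists>a b. is_chord A D a b"
proof -
  obtain j k where jk: "j < length D" "k < length D" "A (D!j) (D!k)"
    "\<not> (k = (j + 1) mod length D \<or> j = (k + 1) mod length D)"
    using nh cyc L4 unfolding is_hole_def by auto
  have "j \<noteq> k" using jk irr by auto
  then consider "j < k" | "k < j" by linarith
  then show ?thesis
  proof cases
    case 1
    have "k \<noteq> j + 1" using jk 1 by auto
    moreover have "\<not> (j = 0 \<and> k = length D - 1)"
    proof
      assume a: "j = 0 \<and> k = length D - 1"
      then have "k + 1 = length D" using jk by simp
      then show False using jk a by simp
    qed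
    ultimately have "is_chord A D j k" using 1 jk unfolding is_chord_def by auto
    then show ?thesis by blast
  next
    case 2
    have "j \<noteq> k + 1" using jk 2 by auto
    moreover have "\<not> (k = 0 \<and> j = length D - 1)"
    proof
      assume a: "k = 0 \<and> j = length D - 1"
      then have "j + 1 = length D" using jk by simp
      then show False using jk a by simp
    qed
    ultimately have "is_chord A D k j" using 2 jk symA unfolding is_chord_def by auto
    then show ?thesis by blast
  qed
qed

lemma hole_lemma:
  assumes symA: "\<And>x y. A x y \<Longrightarrow> A y x" and irr: "\<And>x. \<not> A x x"
  shows "is_cycle A D \<Longrightarrow> x0 \<in> set D \<Longrightarrow> x0 \<noteq> r \<Longrightarrow> \<not> A r x0 \<Longrightarrow>
    (\<forall>y\<in>set D. \<forall>z\<in>set D. A x0 y \<longrightarrow> A x0 z \<longrightarrow> \<not> A y z) \<Longrightarrow> \<exists>ys. bad_hole A r ys"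
proof (induction "length D" arbitrary: D rule: less_induct)
  case less
  show ?case
  proof (cases "is_hole A D")
    case True
    then show ?thesis using less.prems unfolding bad_hole_def by blast
  next
    case False
    have L3: "length D \<ge> 3" using less.prems unfolding is_cycle_def by simp
    have L4: "length D \<ge> 4"
    proof (rule ccontr)
      assume "\<not> 4 \<le> length D"
      then have L: "length D = 3" using L3 by simp
      obtain t where t: "t < 3" "D ! t = x0" using less.prems(2) L by (metis in_set_conv_nth)
      have dD: "distinct D" using less.prems unfolding is_cycle_def by simp
      have "\<exists>u v::nat. u < 3 \<and> v < 3 \<and> u \<noteq> t \<and> v \<noteq> t \<and> u \<noteq> v" using t(1) by presburger
      then obtain u v where uv: "u < 3" "v < 3" "u \<noteq> t" "v \<noteq> t" "u \<noteq> v" by blast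
      have "D!u \<noteq> x0" "D!v \<noteq> x0" "D!u \<noteq> D!v" using dD uv t L by (auto simp: nth_eq_iff_index_eq)
      moreover have "D!u \<in> set D" "D!v \<in> set D" using uv L by auto
      ultimately have "A x0 (D!u)" "A x0 (D!v)" "A (D!u) (D!v)"
        using cyc3_all[OF less.prems(1) L symA] less.prems(2) by auto
      then show False using less.prems(5) \<open>D!u \<in> set D\<close> \<open>D!v \<in> set D\<close> by blast
    qed
    obtain a b where ch: "is_chord A D a b"
      using not_hole_chord[OF less.prems(1) False L4 symA irr] by blast
    obtain t where t: "t < length D" "D ! t = x0" using less.prems(2) by (metis in_set_conv_nth)
    show ?thesis
    proof (cases "a \<le> t \<and> t \<le> b")
      case True
      note I = inner_cycle[OF less.prems(1) ch symA]
      show ?thesis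
        apply (rule less.hyps[OF I(2) I(1)])
        using I(3)[of t] True t less.prems I(4) by auto
    next
      case False
      note O = outer_cycle[OF less.prems(1) ch symA]
      have "t \<le> a \<or> b \<le> t" using False by auto
      show ?thesis
        apply (rule less.hyps[OF O(2) O(1)])
        using O(3)[of t] \<open>t \<le> a \<or> b \<le> t\<close> t less.prems O(4) by auto
    qed
  qed
qed

lemma cyc4:
  assumes "distinct [a,b,c,d]" "A a b" "A b c" "A c d" "A d a"
  shows "is_cycle A [a,b,c,d]"
proof -
  { fix j :: nat assume "j < 4"
    then have "j = 0 \<or> j = 1 \<or> j = 2 \<or> j = 3" by arith
    then have "A ([a,b,c,d] ! j) ([a,b,c,d] ! ((j + 1) mod 4))" using assms by (elim disjE) auto }
  then show ?thesis unfolding is_cycle_def using assms(1) by auto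
qed

lemma hole4:
  assumes "distinct [a,b,c,d]" "A a b" "A b c" "A c d" "A d a" "\<not> A a c" "\<not> A b d"
    and symA: "\<And>x y. A x y \<Longrightarrow> A y x" and irr: "\<And>x. \<not> A x x"
  shows "is_hole A [a,b,c,d]"
proof -
  have cyc: "is_cycle A [a,b,c,d]" by (rule cyc4[OF assms(1-5)])
  have nca: "\<not> A c a" "\<not> A d b" using assms(6,7) symA by blast+
  have "\<forall>j k. j < length [a,b,c,d] \<and> k < length [a,b,c,d] \<and> A ([a,b,c,d] ! j) ([a,b,c,d] ! k) \<longrightarrow>
        k = (j + 1) mod length [a,b,c,d] \<or> j = (k + 1) mod length [a,b,c,d]"
  proof (intro allI impI)
    fix j k :: nat assume h: "j < length [a,b,c,d] \<and> k < length [a,b,c,d] \<and> A ([a,b,c,d] ! j) ([a,b,c,d] ! k)"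
    have "j < 4" "k < 4" using h by simp_all
    then have j4: "j = 0 \<or> j = 1 \<or> j = 2 \<or> j = 3" and k4: "k = 0 \<or> k = 1 \<or> k = 2 \<or> k = 3" by arith+
    have hA: "A ([a,b,c,d] ! j) ([a,b,c,d] ! k)" using h by simp
    show "k = (j + 1) mod length [a,b,c,d] \<or> j = (k + 1) mod length [a,b,c,d]"
      using j4 k4 hA assms(6,7) nca irr by (elim disjE) simp_all
  qed
  then show ?thesis unfolding is_hole_def using cyc by simp
qed

lemma wc4:
  assumes "\<not> A a c"
    and "(w b c \<le> w b d \<and> w c d \<le> w b d) \<or> (w a b \<le> w b d \<and> w d a \<le> w b d)"
  shows "well_covered A w [a,b,c,d]"
proof -
  have cov: "covers w [a,b,c,d] 1 3"
  proof -
    from assms(2) show ?thesis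
    proof
      assume h: "w b c \<le> w b d \<and> w c d \<le> w b d"
      have "\<forall>j. 1 \<le> j \<and> j < 3 \<longrightarrow> w ([a,b,c,d] ! j) ([a,b,c,d] ! (j + 1)) \<le> w ([a,b,c,d]!1) ([a,b,c,d]!3)"
      proof (intro allI impI)
        fix j :: nat assume "1 \<le> j \<and> j < 3"
        then have "j = 1 \<or> j = 2" by arith
        then show "w ([a,b,c,d] ! j) ([a,b,c,d] ! (j + 1)) \<le> w ([a,b,c,d]!1) ([a,b,c,d]!3)"
          using h by auto
      qed
      then show ?thesis unfolding covers_def by blast
    next
      assume h: "w a b \<le> w b d \<and> w d a \<le> w b d"
      have "\<forall>j. (j < 1 \<or> 3 \<le> j) \<and> j < length [a,b,c,d] \<longrightarrow>
          w ([a,b,c,d] ! j) ([a,b,c,d] ! ((j + 1) mod length [a,b,c,d])) \<le> w ([a,b,c,d]!1) ([a,b,c,d]!3)"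
      proof (intro allI impI)
        fix j :: nat assume "(j < 1 \<or> 3 \<le> j) \<and> j < length [a,b,c,d]"
        then have "j = 0 \<or> j = 3" by auto
        then show "w ([a,b,c,d] ! j) ([a,b,c,d] ! ((j + 1) mod length [a,b,c,d])) \<le> w ([a,b,c,d]!1) ([a,b,c,d]!3)"
          using h by auto
      qed
      then show ?thesis unfolding covers_def by blast
    qed
  qed
  show ?thesis unfolding well_covered_def
  proof (intro allI impI)
    fix i j assume ch: "is_chord A [a,b,c,d] i j"
    then have "i < j" "j < 4" "j \<noteq> i + 1" "\<not> (i = 0 \<and> j = 3)" "A ([a,b,c,d]!i) ([a,b,c,d]!j)"
      unfolding is_chord_def by auto
    then have "(i = 0 \<and> j = 2) \<or> (i = 1 \<and> j = 3)" "A ([a,b,c,d]!i) ([a,b,c,d]!j)" by arith+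
    then have "i = 1 \<and> j = 3" using assms(1) by auto
    then show "covers w [a,b,c,d] i j" using cov by simp
  qed
qed

lemma hole_violated:
  assumes "bad_hole A r xs" and symA: "\<And>x y. A x y \<Longrightarrow> A y x"
  shows "violated_cycle A w r xs"
proof -
  have h: "is_hole A xs" and bx: "\<exists>x\<in>set xs. x \<noteq> r \<and> \<not> A r x" using assms unfolding bad_hole_def by auto
  have cyc: "is_cycle A xs" and L4: "length xs \<ge> 4"
    and nc: "\<forall>j k. j < length xs \<and> k < length xs \<and> A (xs ! j) (xs ! k) \<longrightarrow>
        k = (j + 1) mod length xs \<or> j = (k + 1) mod length xs"
    using h unfolding is_hole_def by auto
  have wc: "well_covered A w xs" unfolding well_covered_def
  proof (intro allI impI)
    fix a b assume "is_chord A xs a b"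
    then have ab: "a < b" "b < length xs" "A (xs!a) (xs!b)" "b \<noteq> a + 1" "\<not> (a = 0 \<and> b = length xs - 1)"
      unfolding is_chord_def by auto
    then have "b = (a + 1) mod length xs \<or> a = (b + 1) mod length xs" using nc[rule_format, of a b] by simp
    moreover have "(a + 1) mod length xs = a + 1" using ab by simp
    moreover have "a = (b + 1) mod length xs \<Longrightarrow> False"
    proof -
      assume a: "a = (b + 1) mod length xs"
      show False
      proof (cases "b + 1 < length xs")
        case True then show False using a ab by simp
      next
        case False then have "b + 1 = length xs" using ab by simp
        then show False using a ab by simp
      qed
    qed
    ultimately show "covers w xs a b" using ab by auto
  qed
  have ne: "xs \<noteq> []" using L4 by auto
  have "distinct xs" using cyc unfolding is_cycle_def by simp
  then have "xs!0 \<noteq> xs!2" using L4 ne nth_eq_iff_index_eq[of xs 0 2] by simp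
  moreover have "\<not> A (xs!0) (xs!2)"
  proof
    assume "A (xs!0) (xs!2)"
    then have "2 = (0 + 1) mod length xs \<or> 0 = (2 + 1) mod length xs" using nc[rule_format, of 0 2] L4 ne by simp
    then show False using L4 by auto
  qed
  moreover have l02: "0 < length xs" "2 < length xs" using L4 ne by simp_all
  moreover have "xs!0 \<in> set xs" "xs!2 \<in> set xs" using l02 by (metis nth_mem)+
  ultimately show ?thesis unfolding violated_cycle_def using cyc wc bx by blast
qed

lemma diamond_violated:
  assumes "bad_diamond A w r a b c d"
  shows "violated_cycle A w r [a,b,c,d]"
proof -
  have dm: "distinct [a,b,c,d]" "A a b" "A b c" "A c d" "A d a" "\<not> A a c"
    using assms unfolding bad_diamond_def induced_diamond_def by auto
  have cyc: "is_cycle A [a,b,c,d]" by (rule cyc4[OF dm(1-5)])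
  show ?thesis using assms cyc dm unfolding bad_diamond_def violated_cycle_def by auto
qed



lemma prefix_cycle2:
  assumes d: "distinct E" and m: "2 \<le> m" "m < length E"
    and e: "\<And>j. j < m \<Longrightarrow> A (E!j) (E!(Suc j))" and cl: "A (E!m) (E!0)"
  shows "is_cycle A (take (Suc m) E)"
proof -
  have d': "distinct (take (Suc m) E)" using d by simp
  have len: "length (take (Suc m) E) = Suc m" using m by simp
  { fix j assume j: "j < Suc m"
    have "A (take (Suc m) E ! j) (take (Suc m) E ! (Suc j mod Suc m))"
    proof (cases "j < m")
      case True
      then have e1: "Suc j mod Suc m = Suc j" by simp
      have "A (E!j) (E!(Suc j))" using e True by simp
      then show ?thesis using e1 True m by (simp add: nth_take)
    next
      case False
      then have "j = m" using j by simp
      then show ?thesis using cl m by (simp add: nth_take)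
    qed }
  then show ?thesis unfolding is_cycle_def using d' len m by simp
qed

lemma rot_idx:
  fixes t s L :: nat
  assumes "t < L" "s \<le> L"
  shows "(s + (t + L - s) mod L) mod L = t"
proof -
  have "(s + (t + L - s) mod L) mod L = (s + (t + L - s)) mod L" by (rule mod_add_right_eq)
  also have "s + (t + L - s) = t + L" using assms by simp
  finally show ?thesis using assms by simp
qed

locale wg =
  fixes V :: "'a set" and w :: "'a \<Rightarrow> 'a \<Rightarrow> real" and r :: 'a
  assumes finV: "finite V" and symw: "\<And>x y. w x y = w y x"
begin

abbreviation "WV \<equiv> weight_values V w"
abbreviation "K \<equiv> card WV"
abbreviation "G \<equiv> Gadj V w"
abbreviation "sl \<equiv> sorted_list_of_set WV"

definition BAD :: bool where
  "BAD \<longleftrightarrow> (\<exists>j. 1 \<le> j \<and> j < K \<and>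
     ((\<exists>ys. bad_hole (G j) r ys) \<or> (\<exists>a b c d. bad_diamond (G j) w r a b c d)))"

lemma finWV: "finite WV"
proof -
  have "WV \<subseteq> (\<lambda>p. w (fst p) (snd p)) ` (V \<times> V)"
    unfolding weight_values_def by force
  then show ?thesis using finV by (meson finite_SigmaI finite_imageI finite_subset)
qed

lemma sl_set: "set sl = WV" using finWV by simp
lemma sl_len: "length sl = K" using finWV by simp
lemma sl_sorted: "sorted_wrt (<) sl"
  using finWV by (simp add: strict_sorted_iff)

lemma wval_strict:
  assumes "1 \<le> i" "i < j" "j \<le> K"
  shows "wval V w i < wval V w j"
  unfolding wval_def using sorted_wrt_nth_less[OF sl_sorted, of "i - 1" "j - 1"] assms sl_len by simp

lemma wval_le_imp:
  assumes "1 \<le> i" "i \<le> K" "1 \<le> j" "j \<le> K" "wval V w i \<le> wval V w j"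
  shows "i \<le> j"
proof (rule ccontr)
  assume "\<not> i \<le> j"
  then have "wval V w j < wval V w i" using wval_strict[of j i] assms by simp
  then show False using assms by simp
qed

lemma level_of:
  assumes "x \<in> V" "y \<in> V" "x \<noteq> y"
  shows "\<exists>m. 1 \<le> m \<and> m \<le> K \<and> wval V w m = w x y"
proof -
  have "w x y \<in> WV" unfolding weight_values_def using assms by blast
  then obtain n where n: "n < length sl" "sl ! n = w x y" using sl_set by (metis in_set_conv_nth)
  then show ?thesis using sl_len unfolding wval_def by (intro exI[of _ "Suc n"]) simp
qed

lemma G_def': "G i x y \<longleftrightarrow> x \<in> V \<and> y \<in> V \<and> x \<noteq> y \<and> w x y \<le> wval V w i"
  unfolding Gadj_def by simp

lemma G_sym: "G i x y \<Longrightarrow> G i y x" unfolding Gadj_def using symw by auto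
lemma G_irr: "\<not> G i x x" unfolding Gadj_def by auto

lemma G_mono:
  assumes "1 \<le> j" "j \<le> i" "i \<le> K" "G j x y"
  shows "G i x y"
proof -
  have "wval V w j \<le> wval V w i"
    using wval_strict[of j i] assms by (cases "j = i") auto
  then show ?thesis using assms(4) unfolding Gadj_def by auto
qed

lemma level_le:
  assumes "G i x y" "1 \<le> i" "i \<le> K"
  shows "\<exists>m. 1 \<le> m \<and> m \<le> i \<and> wval V w m = w x y"
proof -
  obtain m where m: "1 \<le> m" "m \<le> K" "wval V w m = w x y"
    using level_of assms(1) unfolding Gadj_def by blast
  have "wval V w m \<le> wval V w i" using assms(1) m unfolding Gadj_def by simp
  then have "m \<le> i" using wval_le_imp[of m i] m assms by simp
  then show ?thesis using m by blast
qed

lemma G_lower: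
  assumes "G i x y" "w x y \<le> wval V w m"
  shows "G m x y"
  using assms unfolding Gadj_def by auto

lemma G_weight: "G m x y \<Longrightarrow> w x y \<le> wval V w m" unfolding Gadj_def by auto

end


context wg
begin

lemma G_mono': "1 \<le> m \<Longrightarrow> m \<le> i \<Longrightarrow> i < K \<Longrightarrow> G m x y \<Longrightarrow> G i x y"
  using G_mono by simp

lemma take_last_split:
  assumes "length xs \<ge> 1"
  shows "set xs = insert (xs ! (length xs - 1)) (set (take (length xs - 1) xs))"
proof -
  have "xs = take (length xs - 1) xs @ [xs ! (length xs - 1)]"
    using assms by (metis One_nat_def append_butlast_last_id butlast_conv_take last_conv_nth
        list.size(3) not_one_le_zero)
  then have "set xs = set (take (length xs - 1) xs @ [xs ! (length xs - 1)])" by simp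
  then show ?thesis by simp
qed

lemma finish:
  assumes IH: "\<And>ys j. length ys < length xs \<Longrightarrow> 1 \<le> j \<Longrightarrow> j < K \<Longrightarrow> violated_cycle (G j) w r ys \<Longrightarrow> BAD"
    and i: "1 \<le> i" "i < K" and m: "1 \<le> m" "m \<le> i"
    and viol: "violated_cycle (G i) w r xs"
    and L4: "4 \<le> length xs"
    and pq: "G i (xs!0) (xs!(length xs - 2))"
    and bad: "b \<in> {xs!(length xs - 1), xs!0, xs!(length xs - 2)}" "b \<noteq> r" "\<not> G i r b"
    and cyc': "is_cycle (G m) (take (length xs - 1) xs)"
    and wc': "well_covered (G m) w (take (length xs - 1) xs)"
    and hcov: "\<And>y. G m (xs!0) y \<Longrightarrow> G m y (xs!(length xs - 2)) \<Longrightarrow>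
       (w (xs!0) y \<le> w (xs!0) (xs!(length xs - 2)) \<and> w y (xs!(length xs - 2)) \<le> w (xs!0) (xs!(length xs - 2))) \<or>
       (w (xs!(length xs - 1)) (xs!0) \<le> w (xs!0) (xs!(length xs - 2)) \<and>
        w (xs!(length xs - 2)) (xs!(length xs - 1)) \<le> w (xs!0) (xs!(length xs - 2)))"
  shows BAD
proof -
  define L where "L = length xs"
  define z where "z = xs ! (L - 1)"
  define p where "p = xs ! 0"
  define q where "q = xs ! (L - 2)"
  define C where "C = take (L - 1) xs"
  have cyc: "is_cycle (G i) xs" and wc: "well_covered (G i) w xs"
    and nonadj: "\<exists>x\<in>set xs. \<exists>y\<in>set xs. x \<noteq> y \<and> \<not> G i x y"
    using viol unfolding violated_cycle_def by auto
  have dist: "distinct xs" using cyc unfolding is_cycle_def by simp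
  have edges: "\<forall>j<L. G i (xs ! j) (xs ! (Suc j mod L))" using cyc unfolding is_cycle_def L_def by simp
  have "Suc (L - 1) = L" using L4 L_def by simp
  then have "Suc (L - 1) mod L = 0" by simp
  then have zp: "G i z p" using edges[rule_format, of "L - 1"] L4 L_def z_def p_def by simp
  have "Suc (L - 2) = L - 1" "L - 1 < L" using L4 L_def by simp_all
  then have "Suc (L - 2) mod L = L - 1" by simp
  then have qz: "G i q z" using edges[rule_format, of "L - 2"] L4 L_def z_def q_def by simp
  have ne: "xs \<noteq> []" using L4 by auto
  have zpq: "z \<noteq> p" "z \<noteq> q" "p \<noteq> q"
    using dist L4 L_def ne unfolding z_def p_def q_def by (simp_all add: nth_eq_iff_index_eq)
  have setxs: "set xs = insert z (set C)" unfolding z_def C_def L_def using take_last_split[of xs] L4 by simp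
  have lC: "length C = L - 1" unfolding C_def L_def by simp
  have Cn: "C ! 0 = p" "C ! (L - 2) = q" unfolding C_def p_def q_def using L4 L_def by simp_all
  have "0 < length C" "L - 2 < length C" using lC L4 L_def by simp_all
  then have pC: "p \<in> set C" "q \<in> set C" using Cn by (metis nth_mem)+
  have lenC: "length C < length xs" unfolding C_def L_def using L4 by simp
  have mK: "m < K" using m i by simp
  have Gmi: "\<And>x y. G m x y \<Longrightarrow> G i x y" using G_mono' m i by blast
  have pqi: "G i p q" using pq unfolding p_def q_def L_def by simp
  have badb: "b \<in> {z, p, q}" using bad(1) unfolding z_def p_def q_def L_def by simp
  show BAD
  proof (cases "(\<exists>x\<in>set C. \<exists>y\<in>set C. x \<noteq> y \<and> \<not> G m x y) \<and> (\<exists>x\<in>set C. x \<noteq> r \<and> \<not> G m r x)")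
    case True
    then have "violated_cycle (G m) w r C" using cyc' wc' unfolding violated_cycle_def C_def L_def by simp
    then show BAD using IH[OF lenC m(1) mK] by simp
  next
    case False
    then consider (cl) "\<forall>x\<in>set C. \<forall>y\<in>set C. x \<noteq> y \<longrightarrow> G m x y" | (ga) "\<forall>x\<in>set C. x = r \<or> G m r x"
      by blast
    then show BAD
    proof cases
      case cl
      obtain v where v: "v \<in> set C" "v \<noteq> z" "\<not> G i z v"
      proof -
        obtain x y where xy: "x \<in> set xs" "y \<in> set xs" "x \<noteq> y" "\<not> G i x y" using nonadj by blast
        show ?thesis
        proof (cases "x = z")
          case True
          then show ?thesis using xy setxs that by auto
        next
          case False
          then have xC: "x \<in> set C" using xy setxs by auto
          show ?thesis
          proof (cases "y = z")
            case True
            then have "\<not> G i z x" using xy G_sym by blast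
            then show ?thesis using xC False that by blast
          next
            case False
            then have "y \<in> set C" using xy setxs by auto
            then have "G m x y" using cl xC xy by blast
            then show ?thesis using Gmi xy by blast
          qed
        qed
      qed
      have zq: "G i z q" using qz G_sym by blast
      have vpq: "v \<noteq> p" "v \<noteq> q" using v zp zq by blast+
      have pv: "G m p v" "G m v q" using cl v pC vpq by auto
      have cov: "(w p v \<le> w p q \<and> w v q \<le> w p q) \<or> (w z p \<le> w p q \<and> w q z \<le> w p q)"
        using hcov[of v] pv unfolding p_def q_def z_def L_def by simp
      have wc4': "well_covered (G i) w [z, p, v, q]" by (rule wc4[where A="G i" and a=z and b=p and c=v and d=q and w=w, OF v(3) cov])
      have idm: "induced_diamond (G i) z p v q" unfolding induced_diamond_def
        using zpq vpq v zp qz pqi Gmi pv by auto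
      show BAD
      proof (cases "(z \<noteq> r \<and> \<not> G i r z) \<or> (v \<noteq> r \<and> \<not> G i r v)")
        case True
        then have "bad_diamond (G i) w r z p v q" unfolding bad_diamond_def using idm wc4' by simp
        then show BAD unfolding BAD_def using i by blast
      next
        case False
        then have zg: "z = r \<or> G i r z" and vg: "v = r \<or> G i r v" by auto
        have bz: "b \<noteq> z" using bad zg by auto
        then have bpq: "b = p \<or> b = q" using badb by auto
        have zr: "z \<noteq> r" using vg v zg by auto
        then have "G i r z" using zg by simp
        then have zr': "G i z r" using G_sym by blast
        have bv: "b \<noteq> v" using bpq vpq by auto
        have "G i p v" "G i v q" using pv Gmi by blast+
        then have bvG: "G i v b" using bpq G_sym by blast
        have vr: "v \<noteq> r" using bvG bad(3) by auto
        then have vr': "G i r v" using vg by simp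
        have "G i p z" using zp G_sym by blast
        then have bzG: "G i b z" using bpq qz by blast
        have nbr: "\<not> G i b r" using bad(3) G_sym by blast
        have ds: "distinct [b, z, r, v]" using bz bad(2) bv zr v(2) vr by auto
        have "is_hole (G i) [b, z, r, v]"
          by (rule hole4[OF ds bzG zr' vr' bvG nbr v(3) G_sym G_irr])
        then have "bad_hole (G i) r [b, z, r, v]" unfolding bad_hole_def using bad by auto
        then show BAD unfolding BAD_def using i by blast
      qed
    next
      case ga
      have bz: "b = z"
      proof (rule ccontr)
        assume "b \<noteq> z"
        then have "b \<in> set C" using badb pC by auto
        then have "b = r \<or> G m r b" using ga by auto
        then show False using bad Gmi by blast
      qed
      have zq: "G i z q" using qz G_sym by blast
      have nrz: "\<not> G i r z" using bad bz by simp
      have nzr: "\<not> G i z r" using nrz G_sym by blast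
      have pr: "p \<noteq> r" "q \<noteq> r" using zp zq nzr by blast+
      have prG: "G m r p" "G m r q" using ga pC pr by auto
      have prG2: "G m p r" using prG G_sym by blast
      have cov: "(w p r \<le> w p q \<and> w r q \<le> w p q) \<or> (w z p \<le> w p q \<and> w q z \<le> w p q)"
        using hcov[of r] prG2 prG(2) unfolding p_def q_def z_def L_def by simp
      have zr: "z \<noteq> r" using bad bz by simp
      have wc4': "well_covered (G i) w [z, p, r, q]" by (rule wc4[where A="G i" and a=z and b=p and c=r and d=q and w=w, OF nzr cov])
      have Gi2: "G i p r" "G i r q" using prG2 prG Gmi by blast+
      have ds: "distinct [z, p, r, q]" using zpq pr zr by auto
      have idm: "induced_diamond (G i) z p r q" unfolding induced_diamond_def
        using ds zp Gi2 qz pqi nzr by simp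
      have "bad_diamond (G i) w r z p r q" unfolding bad_diamond_def using idm wc4' bad bz by simp
      then show BAD unfolding BAD_def using i by blast
    qed
  qed
qed

end


lemma chord_take:
  assumes "is_chord A' (take (Suc m) E) c d" "m + 2 \<le> length E"
  shows "is_chord A' E c d" "d \<le> m" "c < d" "d \<noteq> c + 1" "A' (E!c) (E!d)"
proof -
  have h: "c < d" "d < Suc m" "A' (take (Suc m) E ! c) (take (Suc m) E ! d)" "d \<noteq> c + 1"
    using assms unfolding is_chord_def by auto
  then have "take (Suc m) E ! c = E ! c" "take (Suc m) E ! d = E ! d" by (simp_all add: nth_take)
  then show "A' (E!c) (E!d)" using h by simp
  then show "is_chord A' E c d" using h assms(2) unfolding is_chord_def by auto
  show "d \<le> m" "c < d" "d \<noteq> c + 1" using h by auto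
qed

lemma take_rot_mem:
  assumes "j \<le> mm" "mm < length E"
  shows "rotate s E ! j \<in> set (take (Suc mm) (rotate s E))"
proof -
  have "take (Suc mm) (rotate s E) ! j = rotate s E ! j" using assms by (simp add: nth_take)
  moreover have "j < length (take (Suc mm) (rotate s E))" using assms by simp
  ultimately show ?thesis by (metis nth_mem)
qed

context wg
begin

lemma TRI:
  assumes IH: "\<And>ys j. length ys < length xs \<Longrightarrow> 1 \<le> j \<Longrightarrow> j < K \<Longrightarrow> violated_cycle (G j) w r ys \<Longrightarrow> BAD"
    and i: "1 \<le> i" "i < K"
    and viol: "violated_cycle (G i) w r xs"
    and L4: "4 \<le> length xs"
    and pq: "G i (xs!0) (xs!(length xs - 2))"
    and bad: "b \<in> {xs!(length xs - 1), xs!0, xs!(length xs - 2)}" "b \<noteq> r" "\<not> G i r b"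
  shows BAD
proof -
  define L where "L = length xs"
  define z where "z = xs ! (L - 1)"
  define p where "p = xs ! 0"
  define q where "q = xs ! (L - 2)"
  define C where "C = take (L - 1) xs"
  have CS: "C = take (Suc (L - 2)) xs" unfolding C_def using L4 L_def by (simp add: Suc_diff_Suc numeral_2_eq_2)
  have cyc: "is_cycle (G i) xs" and wc: "well_covered (G i) w xs"
    using viol unfolding violated_cycle_def by auto
  have ne: "xs \<noteq> []" using L4 by auto
  have edges: "\<forall>j<L. G i (xs ! j) (xs ! (Suc j mod L))" using cyc unfolding is_cycle_def L_def by simp
  have pqi: "G i p q" using pq unfolding p_def q_def L_def by simp
  have qpi: "G i q p" using pqi G_sym by blast
  have cycC: "is_cycle (G i) C" unfolding CS
    by (rule prefix_cycle[OF cyc]) (use L4 L_def qpi p_def q_def in auto)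
  have ch: "is_chord (G i) xs 0 (L - 2)" unfolding is_chord_def using L4 L_def pqi p_def q_def by auto
  then have "covers w xs 0 (L - 2)" using wc unfolding well_covered_def by blast
  then have cv: "(\<forall>j. j < L - 2 \<longrightarrow> ew w xs j \<le> w p q) \<or>
      (\<forall>j. L - 2 \<le> j \<and> j < L \<longrightarrow> ew w xs j \<le> w p q)"
    using covers_alt[of "L - 2" xs w 0] L4 L_def p_def q_def by auto
  have "Suc (L - 1) = L" using L4 L_def by simp
  then have ewz: "ew w xs (L - 1) = w z p" unfolding ew_def z_def p_def L_def by simp
  have "Suc (L - 2) = L - 1" "L - 1 < L" using L4 L_def by simp_all
  then have ewq: "ew w xs (L - 2) = w q z" unfolding ew_def z_def q_def L_def by simp
  have lenC: "length C < length xs" unfolding C_def L_def using L4 by simp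
  have bad': "b \<in> {xs!(length xs - 1), xs!0, xs!(length xs - 2)}" using bad by simp
  show BAD
  proof (cases "w p q < ew w xs (L - 2) \<or> w p q < ew w xs (L - 1)")
    case True
    have "\<not> (\<forall>j. L - 2 \<le> j \<and> j < L \<longrightarrow> ew w xs j \<le> w p q)"
    proof
      assume h: "\<forall>j. L - 2 \<le> j \<and> j < L \<longrightarrow> ew w xs j \<le> w p q"
      have ar: "L - 2 \<le> L - 2 \<and> L - 2 < L" "L - 2 \<le> L - 1 \<and> L - 1 < L" using L4 L_def by auto
      have "ew w xs (L - 2) \<le> w p q" "ew w xs (L - 1) \<le> w p q"
        using h[rule_format, OF ar(1)] h[rule_format, OF ar(2)] by auto
      then show False using True by auto
    qed
    then have cv1: "\<forall>j. j < L - 2 \<longrightarrow> ew w xs j \<le> w p q" using cv by blast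
    have wcC: "well_covered (G i) w C"
    proof -
      obtain j0 where j0: "L - 2 \<le> j0" "j0 < L" "w p q \<le> ew w xs j0"
      proof (cases "w p q < ew w xs (L - 2)")
        case True
        then show ?thesis using that[of "L - 2"] L4 L_def by simp
      next
        case False
        then have "w p q < ew w xs (L - 1)" using \<open>w p q < ew w xs (L - 2) \<or> w p q < ew w xs (L - 1)\<close> by simp
        then show ?thesis using that[of "L - 1"] L4 L_def by simp
      qed
      show ?thesis unfolding CS
        by (rule GS_prefix[OF wc _ symw]) (use j0 L4 L_def p_def q_def in auto)
    qed
    obtain m where m: "1 \<le> m" "m \<le> i" "wval V w m = w p q" using level_le[OF pqi i(1)] i by auto
    have Gmi: "\<And>x y. G m x y \<Longrightarrow> G i x y" using G_mono' m i by blast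
    have cycCm: "is_cycle (G m) C" unfolding CS
    proof (rule prefix_cycle2)
      show "distinct xs" using cyc unfolding is_cycle_def by simp
      show "2 \<le> L - 2" "L - 2 < length xs" using L4 L_def by auto
      fix j assume j: "j < L - 2"
      then have "Suc j mod L = Suc j" using L4 L_def by simp
      moreover have "j < L" using j by simp
      moreover have "G i (xs!j) (xs!(Suc j mod L))" using edges calculation(2) by simp
      ultimately have "G i (xs!j) (xs!Suc j)" "ew w xs j = w (xs!j) (xs!Suc j)"
        unfolding ew_def L_def by simp_all
      then show "G m (xs!j) (xs!Suc j)" using cv1 j m(3) G_lower by auto
    next
      show "G m (xs ! (L - 2)) (xs ! 0)" using qpi m(3) symw G_lower unfolding p_def q_def by simp
    qed
    have wcCm: "well_covered (G m) w C" using wc_mono[OF Gmi wcC] .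
    show BAD
    proof (rule finish[OF IH i m(1,2) viol L4 pq bad' bad(2) bad(3)])
      show "is_cycle (G m) (take (length xs - 1) xs)" using cycCm C_def L_def by simp
      show "well_covered (G m) w (take (length xs - 1) xs)" using wcCm C_def L_def by simp
      fix y assume a: "G m (xs!0) y" "G m y (xs!(length xs - 2))"
      have "w (xs!0) y \<le> wval V w m" "w y (xs!(length xs - 2)) \<le> wval V w m"
        using G_weight[OF a(1)] G_weight[OF a(2)] by simp_all
      then have "w (xs!0) y \<le> w p q" "w y (xs!(length xs - 2)) \<le> w p q" using m(3) by simp_all
      then show "(w (xs!0) y \<le> w (xs!0) (xs!(length xs - 2)) \<and> w y (xs!(length xs - 2)) \<le> w (xs!0) (xs!(length xs - 2))) \<or>
       (w (xs!(length xs - 1)) (xs!0) \<le> w (xs!0) (xs!(length xs - 2)) \<and>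
        w (xs!(length xs - 2)) (xs!(length xs - 1)) \<le> w (xs!0) (xs!(length xs - 2)))"
        unfolding p_def q_def L_def by simp
    qed
  next
    case False
    then have T1: "w z p \<le> w p q" "w q z \<le> w p q" using ewz ewq by auto
    have hcov: "\<And>y. (w (xs!0) y \<le> w (xs!0) (xs!(length xs - 2)) \<and> w y (xs!(length xs - 2)) \<le> w (xs!0) (xs!(length xs - 2))) \<or>
       (w (xs!(length xs - 1)) (xs!0) \<le> w (xs!0) (xs!(length xs - 2)) \<and>
        w (xs!(length xs - 2)) (xs!(length xs - 1)) \<le> w (xs!0) (xs!(length xs - 2)))"
      using T1 unfolding z_def p_def q_def L_def by simp
    show BAD
    proof (cases "\<exists>c d. is_chord (G i) C c d \<and> \<not> (\<forall>j. c \<le> j \<and> j < d \<longrightarrow> ew w xs j \<le> w (xs!c) (xs!d))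
        \<and> (\<forall>j. (j < c \<or> d \<le> j) \<and> j < L \<longrightarrow> ew w xs j \<le> w (xs!c) (xs!d)) \<and> w (xs!c) (xs!d) < w p q")
      case True
      then obtain c d where cd: "is_chord (G i) C c d"
        and nc1: "\<not> (\<forall>j. c \<le> j \<and> j < d \<longrightarrow> ew w xs j \<le> w (xs!c) (xs!d))"
        and c2: "\<forall>j. (j < c \<or> d \<le> j) \<and> j < L \<longrightarrow> ew w xs j \<le> w (xs!c) (xs!d)"
        and lt: "w (xs!c) (xs!d) < w p q" by blast
      have L2: "(L - 2) + 2 \<le> length xs" using L4 L_def by simp
      note ct = chord_take[OF cd[unfolded CS] L2]
      obtain j0 where j0: "c \<le> j0" "j0 < d" "w (xs!c) (xs!d) < ew w xs j0" using nc1 by auto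
      have Gcd: "G i (xs!c) (xs!d)" using ct by simp
      obtain m where m: "1 \<le> m" "m \<le> i" "wval V w m = w (xs!c) (xs!d)" using level_le[OF Gcd i(1)] i by auto
      have Gmi: "\<And>x y. G m x y \<Longrightarrow> G i x y" using G_mono' m i by blast
      define E where "E = rotate d xs"
      define mm where "mm = L - d + c"
      have dL: "d \<le> L - 2" "c + 2 \<le> d" using ct by auto
      have mm: "2 \<le> mm" "mm < L" "mm + 2 \<le> L" unfolding mm_def using dL L4 L_def by auto
      have lenE: "length E = L" unfolding E_def L_def by simp
      have En: "\<And>j. j < L \<Longrightarrow> E ! j = xs ! ((d + j) mod L)" unfolding E_def L_def by (simp add: nth_rotate)
      have cycE: "is_cycle (G i) E" unfolding E_def by (rule cycle_rotate[OF cyc])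
      have wcE: "well_covered (G i) w E" unfolding E_def by (rule wc_rotate[OF G_sym symw wc])
      have Emm: "E ! mm = xs ! c"
      proof -
        have "(d + mm) mod L = c" unfolding mm_def using dL L4 L_def by simp
        then show ?thesis using En mm by simp
      qed
      have L0: "0 < L" using ne L_def by simp
      have E0: "E ! 0 = xs ! d" using En[OF L0] dL L_def by simp
      define Dg where "Dg = take (Suc mm) E"
      have cycD: "is_cycle (G m) Dg" unfolding Dg_def
      proof (rule prefix_cycle2)
        show "distinct E" using cycE unfolding is_cycle_def by simp
        show "2 \<le> mm" "mm < length E" using mm lenE by auto
        fix j assume j: "j < mm"
        have sj: "Suc j mod L = Suc j" using j mm by simp
        have jL: "j < length E" using j mm lenE by simp
        have "\<forall>j<length E. G i (E!j) (E!(Suc j mod length E))" using cycE unfolding is_cycle_def by simp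
        then have "G i (E!j) (E!(Suc j mod length E))" using jL by simp
        then have g: "G i (E!j) (E!Suc j)" using sj lenE by simp
        have "ew w E j = ew w xs ((d + j) mod L)" unfolding E_def L_def
          using ew_rotate[of j xs w d] j mm L_def by simp
        moreover have "ew w E j = w (E!j) (E!Suc j)" unfolding ew_def using sj lenE by simp
        moreover have "ew w xs ((d + j) mod L) \<le> w (xs!c) (xs!d)"
        proof (cases "d + j < L")
          case True
          then have idx: "(d + j) mod L = d + j" by simp
          have "d + j < L \<and> d \<le> d + j" using True by simp
          then show ?thesis using c2[rule_format, of "d + j"] idx by simp
        next
          case False
          have "d + j < 2 * L" using j mm dL by simp
          then have idx: "(d + j) mod L = d + j - L" using False by (simp add: mod_if)
          have "d + j - L < c \<and> d + j - L < L" using j False dL unfolding mm_def by arith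
          then show ?thesis using c2[rule_format, of "d + j - L"] idx by simp
        qed
        ultimately show "G m (E!j) (E!Suc j)" using g m(3) G_lower by simp
      next
        have "G i (xs!c) (xs!d)" using Gcd .
        then show "G m (E!mm) (E!0)" using Emm E0 m(3) G_lower by simp
      qed
      have wcD: "well_covered (G m) w Dg" unfolding Dg_def
      proof (rule GS_prefix[OF wcE Gmi symw])
        show "2 \<le> mm" "mm + 2 \<le> length E" using mm lenE by auto
        show "mm \<le> L - d + j0" "L - d + j0 < length E" using j0 dL lenE unfolding mm_def by auto
        have "(d + (L - d + j0)) mod L = j0" using j0 dL L4 L_def by simp
        then have "ew w E (L - d + j0) = ew w xs j0" unfolding E_def L_def
          using ew_rotate[of "L - d + j0" xs w d] j0 dL L_def by simp
        then show "w (E!0) (E!mm) \<le> ew w E (L - d + j0)" using E0 Emm j0 symw by simp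
      qed
      have memb: "\<And>t. t < L \<Longrightarrow> d \<le> t \<Longrightarrow> xs ! t \<in> set Dg"
      proof -
        fix t assume t: "t < L" "d \<le> t"
        have "E ! (t - d) = xs ! t" using En t by simp
        moreover have "E ! (t - d) \<in> set Dg" unfolding Dg_def E_def
          using take_rot_mem[of "t - d" mm xs d] t mm L_def unfolding mm_def by simp
        ultimately show "xs ! t \<in> set Dg" by simp
      qed
      have pD: "p \<in> set Dg"
      proof -
        have "E ! (L - d) = xs ! 0" using En dL L4 L_def by simp
        moreover have "E ! (L - d) \<in> set Dg" unfolding Dg_def E_def
          using take_rot_mem[of "L - d" mm xs d] dL mm L_def unfolding mm_def by simp
        ultimately show ?thesis unfolding p_def by simp
      qed
      have "L - 1 < L" "d \<le> L - 1" "L - 2 < L" "d \<le> L - 2" using dL L0 by simp_all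
      then have zD: "z \<in> set Dg" and qD: "q \<in> set Dg" unfolding z_def q_def using memb by simp_all
      have bD: "b \<in> set Dg" using bad(1) pD zD qD unfolding z_def p_def q_def L_def by auto
      have dist: "distinct xs" using cyc unfolding is_cycle_def by simp
      have pq_ne: "p \<noteq> q" using dist L4 L_def ne unfolding p_def q_def by (simp add: nth_eq_iff_index_eq)
      have npq: "\<not> G m p q"
      proof
        assume "G m p q"
        then have "w p q \<le> wval V w m" by (rule G_weight)
        then show False using lt m(3) by simp
      qed
      have nrb: "\<not> G m r b" using bad(3) Gmi by blast
      have nonadj: "\<exists>x\<in>set Dg. \<exists>y\<in>set Dg. x \<noteq> y \<and> \<not> G m x y" using pD qD pq_ne npq by blast
      have badD: "\<exists>x\<in>set Dg. x \<noteq> r \<and> \<not> G m r x" using bD bad(2) nrb by blast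
      have "violated_cycle (G m) w r Dg" unfolding violated_cycle_def
        using cycD wcD nonadj badD by simp
      moreover have "length Dg < length xs" unfolding Dg_def using mm lenE L_def by simp
      ultimately show BAD using IH m i by simp
    next
      case False
      have wcC: "well_covered (G i) w C" unfolding CS
      proof (rule S_prefix)
        show "2 \<le> L - 2" "L - 2 + 2 \<le> length xs" using L4 L_def by auto
        fix c d assume cd: "is_chord (G i) (take (Suc (L - 2)) xs) c d"
        have L2: "(L - 2) + 2 \<le> length xs" using L4 L_def by simp
        note ct = chord_take[OF cd L2]
        have "covers w xs c d" using ct(1) wc unfolding well_covered_def by blast
        then have cvv: "(\<forall>j. c \<le> j \<and> j < d \<longrightarrow> ew w xs j \<le> w (xs!c) (xs!d)) \<or>
            (\<forall>j. (j < c \<or> d \<le> j) \<and> j < L \<longrightarrow> ew w xs j \<le> w (xs!c) (xs!d))"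
          using covers_alt[of d xs w c] ct L4 L_def by simp
        have nex: "\<not> (\<not> (\<forall>j. c \<le> j \<and> j < d \<longrightarrow> ew w xs j \<le> w (xs!c) (xs!d))
          \<and> (\<forall>j. (j < c \<or> d \<le> j) \<and> j < L \<longrightarrow> ew w xs j \<le> w (xs!c) (xs!d)) \<and> w (xs!c) (xs!d) < w p q)"
        proof
          assume a: "\<not> (\<forall>j. c \<le> j \<and> j < d \<longrightarrow> ew w xs j \<le> w (xs!c) (xs!d))
            \<and> (\<forall>j. (j < c \<or> d \<le> j) \<and> j < L \<longrightarrow> ew w xs j \<le> w (xs!c) (xs!d)) \<and> w (xs!c) (xs!d) < w p q"
          have cdC: "is_chord (G i) C c d" using cd CS by simp
          have "\<exists>c d. is_chord (G i) C c d \<and> \<not> (\<forall>j. c \<le> j \<and> j < d \<longrightarrow> ew w xs j \<le> w (xs!c) (xs!d))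
            \<and> (\<forall>j. (j < c \<or> d \<le> j) \<and> j < L \<longrightarrow> ew w xs j \<le> w (xs!c) (xs!d)) \<and> w (xs!c) (xs!d) < w p q"
            by (rule exI[of _ c], rule exI[of _ d]) (use cdC a in simp)
          then show False using False by simp
        qed
        have "w (xs ! (L - 2)) (xs ! 0) = w p q" unfolding p_def q_def using symw by simp
        then show "(\<forall>j. c \<le> j \<and> j < d \<longrightarrow> ew w xs j \<le> w (xs!c) (xs!d)) \<or>
          ((\<forall>j. (j < c \<or> d \<le> j) \<and> j < length xs \<longrightarrow> ew w xs j \<le> w (xs!c) (xs!d)) \<and>
            w (xs ! (L - 2)) (xs ! 0) \<le> w (xs!c) (xs!d))"
          using cvv nex L_def by auto
      qed
      show BAD
      proof (rule finish[OF IH i i(1) order.refl viol L4 pq bad' bad(2) bad(3)])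
        show "is_cycle (G i) (take (length xs - 1) xs)" using cycC C_def L_def by simp
        show "well_covered (G i) w (take (length xs - 1) xs)" using wcC C_def L_def by simp
      next
        fix y assume "G i (xs!0) y" "G i y (xs!(length xs - 2))"
        show "(w (xs!0) y \<le> w (xs!0) (xs!(length xs - 2)) \<and> w y (xs!(length xs - 2)) \<le> w (xs!0) (xs!(length xs - 2))) \<or>
       (w (xs!(length xs - 1)) (xs!0) \<le> w (xs!0) (xs!(length xs - 2)) \<and>
        w (xs!(length xs - 2)) (xs!(length xs - 1)) \<le> w (xs!0) (xs!(length xs - 2)))" by (rule hcov)
      qed
    qed
  qed
qed

end


context wg
begin

lemma core3:
  assumes IH: "\<And>ys j. length ys < length zs \<Longrightarrow> 1 \<le> j \<Longrightarrow> j < K \<Longrightarrow> violated_cycle (G j) w r ys \<Longrightarrow> BAD"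
    and i: "1 \<le> i" "i < K"
    and viol: "violated_cycle (G i) w r zs"
    and mx: "j0 < length zs" "\<And>x y. G i x y \<Longrightarrow> w x y \<le> ew w zs j0"
    and x0: "zs ! (length zs - 1) \<noteq> r" "\<not> G i r (zs ! (length zs - 1))"
  shows BAD
proof -
  define L where "L = length zs"
  define x where "x = zs ! (L - 1)"
  have cyc: "is_cycle (G i) zs" and wc: "well_covered (G i) w zs"
    and nonadj: "\<exists>x\<in>set zs. \<exists>y\<in>set zs. x \<noteq> y \<and> \<not> G i x y"
    using viol unfolding violated_cycle_def by auto
  have dist: "distinct zs" and L3: "3 \<le> L" using cyc unfolding is_cycle_def L_def by auto
  have ne: "zs \<noteq> []" using L3 L_def by auto
  have L4: "4 \<le> L"
  proof (rule ccontr)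
    assume "\<not> 4 \<le> L"
    then have "length zs = 3" using L3 L_def by simp
    then show False using nonadj cyc3_all[OF cyc _ G_sym] by blast
  qed
  have xbad: "x \<noteq> r" "\<not> G i r x" using x0 unfolding x_def L_def by auto
  have xmem: "x \<in> set zs" unfolding x_def L_def using ne by simp
  have IH': "\<And>ys j. length ys < length (rotate n zs) \<Longrightarrow> 1 \<le> j \<Longrightarrow> j < K \<Longrightarrow> violated_cycle (G j) w r ys \<Longrightarrow> BAD" for n
    using IH by simp
  have viol_rot: "violated_cycle (G i) w r (rotate n zs)" for n by (rule violated_rotate[OF G_sym symw viol])
  have wcE: "well_covered (G i) w (rotate n zs)" for n by (rule wc_rotate[OF G_sym symw wc])
  have rotn: "\<And>n j. j < L \<Longrightarrow> rotate n zs ! j = zs ! ((n + j) mod L)" unfolding L_def by (simp add: nth_rotate)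
  have ewr: "\<And>n j. j < L \<Longrightarrow> ew w (rotate n zs) j = ew w zs ((n + j) mod L)" unfolding L_def by (rule ew_rotate)
  show BAD
  proof (cases "G i (zs!0) (zs!(L - 2))")
    case True
    show BAD
      by (rule TRI[OF IH i viol]) (use L4 True x0 L_def in auto)
  next
    case nA: False
    show BAD
    proof (cases "\<exists>c. 1 \<le> c \<and> c \<le> L - 3 \<and> G i (zs!c) (zs!(L - 1))")
      case True
      then obtain c where c: "1 \<le> c" "c \<le> L - 3" "G i (zs!c) (zs!(L - 1))" by blast
      have ch: "is_chord (G i) zs c (L - 1)" unfolding is_chord_def using c L4 L_def by auto
      have wch: "w (zs!c) (zs!(L - 1)) \<le> ew w zs j0" using mx(2) c(3) by simp
      show BAD
      proof (cases "c \<le> j0 \<and> j0 < L - 1")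
        case True
        note O = outer_cycle[OF cyc ch G_sym]
        have eqm: "length zs - (L - 1) + c = Suc c" using L4 L_def by simp
        define E where "E = rotate (L - 1) zs"
        define Od where "Od = take (Suc (Suc c)) E"
        have cycO: "is_cycle (G i) Od" using O(1)[unfolded eqm] unfolding Od_def E_def .
        have lenO: "length Od < length zs" using O(2)[unfolded eqm] unfolding Od_def E_def .
        have memO: "\<And>t. t < L \<Longrightarrow> t \<le> c \<or> L - 1 \<le> t \<Longrightarrow> zs ! t \<in> set Od"
          using O(3)[unfolded eqm] unfolding Od_def E_def L_def by simp
        have wcO: "well_covered (G i) w Od" unfolding Od_def
        proof (rule GS_prefix[OF wcE[of "L - 1", folded E_def] _ symw])
          show "\<And>x y. G i x y \<Longrightarrow> G i x y" by simp
          show "2 \<le> Suc c" "Suc c + 2 \<le> length E" using c L4 L_def unfolding E_def by auto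
          show "Suc c \<le> Suc j0" "Suc j0 < length E" using True L_def unfolding E_def by auto
          have "L - 1 + Suc j0 = L + j0" using L4 by simp
          then have "(L - 1 + Suc j0) mod L = j0" using mx(1) L_def by simp
          moreover have "Suc j0 < L" using True by arith
          ultimately have e1: "ew w E (Suc j0) = ew w zs j0" unfolding E_def using ewr[of "Suc j0" "L - 1"] by simp
          have "L - 1 + Suc c = L + c" using L4 by simp
          then have "(L - 1 + Suc c) mod L = c" using c L4 by simp
          moreover have "Suc c < L" using c L4 by arith
          ultimately have e2: "E ! Suc c = zs ! c" unfolding E_def using rotn[of "Suc c" "L - 1"] by simp
          have "0 < L" "(L - 1 + 0) mod L = L - 1" using L4 by simp_all
          then have e3: "E ! 0 = zs ! (L - 1)" unfolding E_def using rotn[of 0 "L - 1"] by simp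
          show "w (E!0) (E!Suc c) \<le> ew w E (Suc j0)" using e1 e2 e3 wch symw by simp
        qed
        have xO: "x \<in> set Od" unfolding x_def using memO L4 by simp
        have z1O: "zs ! 1 \<in> set Od" using memO c L4 by simp
        show BAD
        proof (cases "\<exists>a\<in>set Od. \<exists>b\<in>set Od. a \<noteq> b \<and> \<not> G i a b")
          case True
          have "violated_cycle (G i) w r Od" unfolding violated_cycle_def
            using cycO wcO True xO xbad by blast
          then show BAD using IH[OF lenO i] by simp
        next
          case False
          have "x \<noteq> zs ! 1" unfolding x_def using dist L4 L_def ne by (simp add: nth_eq_iff_index_eq)
          then have g: "G i x (zs ! 1)" using False xO z1O by blast
          define ys where "ys = rotate 1 zs"
          have y0: "ys ! 0 = zs ! 1" unfolding ys_def using rotn[of 0 1] L4 by simp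
          have "(1 + (L - 2)) mod L = L - 1" using L4 by simp
          then have y2: "ys ! (L - 2) = x" unfolding ys_def x_def using rotn[of "L - 2" 1] L4 by simp
          have lys: "length ys = L" unfolding ys_def L_def by simp
          have IHy: "\<And>ys' j. length ys' < length ys \<Longrightarrow> 1 \<le> j \<Longrightarrow> j < K \<Longrightarrow> violated_cycle (G j) w r ys' \<Longrightarrow> BAD"
            using IH lys L_def by simp
          have vy: "violated_cycle (G i) w r ys" unfolding ys_def by (rule viol_rot)
          show BAD
          proof (rule TRI[OF IHy i vy])
            show "4 \<le> length ys" using lys L4 by simp
            show "G i (ys ! 0) (ys ! (length ys - 2))" using y0 y2 lys g G_sym by metis
            show "x \<in> {ys ! (length ys - 1), ys ! 0, ys ! (length ys - 2)}" using y2 lys by simp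
          qed (use xbad in auto)
        qed
      next
        case False
        note I = inner_cycle[OF cyc ch G_sym]
        define E where "E = rotate c zs"
        define m where "m = L - 1 - c"
        define Id where "Id = take (Suc m) E"
        have cycI: "is_cycle (G i) Id" using I(1) unfolding Id_def E_def m_def by simp
        have lenI: "length Id < length zs" using I(2) unfolding Id_def E_def m_def by simp
        have memI: "\<And>t. c \<le> t \<Longrightarrow> t \<le> L - 1 \<Longrightarrow> zs ! t \<in> set Id"
          using I(3) unfolding Id_def E_def m_def by simp
        define j1 where "j1 = (if j0 < c then j0 + L - c else L - 1 - c)"
        have j1: "m \<le> j1" "j1 < L" "(c + j1) mod L = j0"
          using False mx(1) c L4 unfolding j1_def m_def L_def by auto
        have wcI: "well_covered (G i) w Id" unfolding Id_def
        proof (rule GS_prefix[OF wcE[of c, folded E_def] _ symw])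
          show "\<And>x y. G i x y \<Longrightarrow> G i x y" by simp
          show "2 \<le> m" "m + 2 \<le> length E" using c L4 L_def unfolding E_def m_def by auto
          show "m \<le> j1" "j1 < length E" using j1 L_def unfolding E_def by auto
          have e1: "ew w E j1 = ew w zs j0" unfolding E_def using ewr[of j1 c] j1 by simp
          have "(c + m) mod L = L - 1" using c L4 unfolding m_def by simp
          then have e2: "E ! m = zs ! (L - 1)" unfolding E_def using rotn[of m c] c L4 unfolding m_def by simp
          have e3: "E ! 0 = zs ! c" unfolding E_def using rotn[of 0 c] c L4 by simp
          show "w (E!0) (E!m) \<le> ew w E j1" using e1 e2 e3 wch by simp
        qed
        have xI: "x \<in> set Id" unfolding x_def using memI c L4 by simp
        have z3I: "zs ! (L - 3) \<in> set Id" using memI c L4 by simp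
        show BAD
        proof (cases "\<exists>a\<in>set Id. \<exists>b\<in>set Id. a \<noteq> b \<and> \<not> G i a b")
          case True
          have "violated_cycle (G i) w r Id" unfolding violated_cycle_def
            using cycI wcI True xI xbad by blast
          then show BAD using IH[OF lenI i] by simp
        next
          case False
          have "x \<noteq> zs ! (L - 3)" unfolding x_def using dist L4 L_def ne by (simp add: nth_eq_iff_index_eq)
          then have g: "G i x (zs ! (L - 3))" using False xI z3I by blast
          define ys where "ys = rotate (L - 1) zs"
          have y0: "ys ! 0 = x" unfolding ys_def x_def using rotn[of 0 "L - 1"] L4 by simp
          have "(L - 1 + (L - 2)) mod L = L - 3" using L4 by (simp add: mod_if)
          then have y2: "ys ! (L - 2) = zs ! (L - 3)" unfolding ys_def using rotn[of "L - 2" "L - 1"] L4 by simp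
          have lys: "length ys = L" unfolding ys_def L_def by simp
          have IHy: "\<And>ys' j. length ys' < length ys \<Longrightarrow> 1 \<le> j \<Longrightarrow> j < K \<Longrightarrow> violated_cycle (G j) w r ys' \<Longrightarrow> BAD"
            using IH lys L_def by simp
          have vy: "violated_cycle (G i) w r ys" unfolding ys_def by (rule viol_rot)
          show BAD
          proof (rule TRI[OF IHy i vy])
            show "4 \<le> length ys" using lys L4 by simp
            show "G i (ys ! 0) (ys ! (length ys - 2))" using y0 y2 lys g by simp
            show "x \<in> {ys ! (length ys - 1), ys ! 0, ys ! (length ys - 2)}" using y0 by simp
          qed (use xbad in auto)
        qed
      qed
    next
      case nB: False
      have nbr: "\<forall>y\<in>set zs. \<forall>z\<in>set zs. G i x y \<longrightarrow> G i x z \<longrightarrow> \<not> G i y z"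
      proof (intro ballI impI)
        fix y z assume y: "y \<in> set zs" and z: "z \<in> set zs" and gy: "G i x y" and gz: "G i x z"
        have pos: "\<And>u. u \<in> set zs \<Longrightarrow> G i x u \<Longrightarrow> u = zs ! 0 \<or> u = zs ! (L - 2)"
        proof -
          fix u assume u: "u \<in> set zs" "G i x u"
          obtain ju where ju: "ju < L" "zs ! ju = u" using u(1) unfolding L_def by (metis in_set_conv_nth)
          have "ju \<noteq> L - 1" using u(2) ju x_def G_irr by auto
          moreover have "\<not> (1 \<le> ju \<and> ju \<le> L - 3)"
          proof
            assume "1 \<le> ju \<and> ju \<le> L - 3"
            moreover have "G i (zs ! ju) (zs ! (L - 1))" using u(2) ju x_def G_sym by blast
            ultimately show False using nB by blast
          qed
          ultimately have "ju = 0 \<or> ju = L - 2" using ju L4 by arith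
          then show "u = zs ! 0 \<or> u = zs ! (L - 2)" using ju by auto
        qed
        show "\<not> G i y z"
        proof (cases "y = z")
          case True then show ?thesis using G_irr by simp
        next
          case False
          have "y = zs ! 0 \<or> y = zs ! (L - 2)" "z = zs ! 0 \<or> z = zs ! (L - 2)" using pos y z gy gz by auto
          then show ?thesis using False nA G_sym by blast
        qed
      qed
      obtain ys where "bad_hole (G i) r ys"
        using hole_lemma[OF G_sym G_irr cyc xmem xbad nbr] by blast
      then show BAD unfolding BAD_def using i by blast
    qed
  qed
qed

end


context wg
begin

lemma core2:
  assumes IH: "\<And>ys j. length ys < length xs \<Longrightarrow> 1 \<le> j \<Longrightarrow> j < K \<Longrightarrow> violated_cycle (G j) w r ys \<Longrightarrow> BAD"
    and i: "1 \<le> i" "i < K"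
    and viol: "violated_cycle (G i) w r xs"
    and mx: "j0 < length xs" "\<And>x y. G i x y \<Longrightarrow> w x y \<le> ew w xs j0"
  shows BAD
proof -
  define L where "L = length xs"
  obtain x where x: "x \<in> set xs" "x \<noteq> r" "\<not> G i r x" using viol unfolding violated_cycle_def by blast
  obtain t where t: "t < L" "xs ! t = x" using x(1) unfolding L_def by (metis in_set_conv_nth)
  have L3: "3 \<le> L" using viol unfolding violated_cycle_def is_cycle_def L_def by simp
  define zs where "zs = rotate (Suc t) xs"
  have lz: "length zs = L" unfolding zs_def L_def by simp
  have "Suc t + (L - 1) = t + L" using L3 by simp
  then have "(Suc t + (L - 1)) mod L = t" using t by simp
  moreover have "L - 1 < L" using L3 by simp
  moreover have "zs ! (L - 1) = xs ! ((Suc t + (L - 1)) mod length xs)"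
    unfolding zs_def by (rule nth_rotate) (use L3 L_def in simp)
  ultimately have zl: "zs ! (length zs - 1) = x" using t lz L_def by simp
  define j1 where "j1 = (j0 + L - Suc t) mod L"
  have j1L: "j1 < L" unfolding j1_def using L3 by simp
  have "(Suc t + j1) mod L = j0" unfolding j1_def using rot_idx[of j0 L "Suc t"] mx(1) t L_def by simp
  then have ej: "ew w zs j1 = ew w xs j0" unfolding zs_def using ew_rotate[of j1 xs w "Suc t"] j1L L_def by simp
  have IHz: "\<And>ys j. length ys < length zs \<Longrightarrow> 1 \<le> j \<Longrightarrow> j < K \<Longrightarrow> violated_cycle (G j) w r ys \<Longrightarrow> BAD"
    using IH lz L_def by simp
  have vz: "violated_cycle (G i) w r zs" unfolding zs_def by (rule violated_rotate[OF G_sym symw viol])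
  show BAD
  proof (rule core3[OF IHz i vz])
    show "j1 < length zs" using j1L lz by simp
    show "\<And>x y. G i x y \<Longrightarrow> w x y \<le> ew w zs j1" using mx(2) ej by simp
    show "zs ! (length zs - 1) \<noteq> r" "\<not> G i r (zs ! (length zs - 1))" using zl x by simp_all
  qed
qed

lemma core:
  shows "1 \<le> i \<Longrightarrow> i < K \<Longrightarrow> violated_cycle (G i) w r xs \<Longrightarrow> BAD"
proof (induction "length xs" arbitrary: i xs rule: less_induct)
  case less
  define L where "L = length xs"
  have cyc: "is_cycle (G i) xs" and wc: "well_covered (G i) w xs"
    and nonadj: "\<exists>x\<in>set xs. \<exists>y\<in>set xs. x \<noteq> y \<and> \<not> G i x y"
    and bx: "\<exists>x\<in>set xs. x \<noteq> r \<and> \<not> G i r x"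
    using less.prems unfolding violated_cycle_def by auto
  have L3: "3 \<le> L" using cyc unfolding is_cycle_def L_def by simp
  define S where "S = ew w xs ` {..<L}"
  have "ew w xs 0 \<in> S" unfolding S_def using L3 by simp
  then have fS: "finite S" "S \<noteq> {}" unfolding S_def by auto
  obtain j0 where j0: "j0 < L" "ew w xs j0 = Max S" using Max_in[OF fS] unfolding S_def by auto
  have jmax: "\<And>j. j < L \<Longrightarrow> ew w xs j \<le> ew w xs j0" using j0 fS unfolding S_def by simp
  have edges: "\<forall>j<L. G i (xs ! j) (xs ! (Suc j mod L))" using cyc unfolding is_cycle_def L_def by simp
  have ge: "G i (xs ! j0) (xs ! (Suc j0 mod L))" using edges j0(1) by simp
  have iK: "i \<le> K" using less.prems by simp
  obtain m where m: "1 \<le> m" "m \<le> i" "wval V w m = w (xs ! j0) (xs ! (Suc j0 mod L))"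
    using level_le[OF ge less.prems(1) iK] by blast
  have mw: "wval V w m = ew w xs j0" using m(3) unfolding ew_def L_def by simp
  have Gmi: "\<And>x y. G m x y \<Longrightarrow> G i x y" using G_mono' m less.prems by blast
  have cycm: "is_cycle (G m) xs"
  proof -
    { fix j assume j: "j < L"
      then have "G i (xs ! j) (xs ! (Suc j mod L))" using edges by simp
      moreover have "w (xs ! j) (xs ! (Suc j mod L)) \<le> wval V w m" using jmax[OF j] mw unfolding ew_def L_def by simp
      ultimately have "G m (xs ! j) (xs ! (Suc j mod L))" by (rule G_lower) }
    then show ?thesis using cyc unfolding is_cycle_def L_def by simp
  qed
  have wcm: "well_covered (G m) w xs" by (rule wc_mono[OF Gmi wc])
  have nam: "\<exists>x\<in>set xs. \<exists>y\<in>set xs. x \<noteq> y \<and> \<not> G m x y" using nonadj Gmi by blast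
  have bm: "\<exists>x\<in>set xs. x \<noteq> r \<and> \<not> G m r x" using bx Gmi by blast
  have vm: "violated_cycle (G m) w r xs" unfolding violated_cycle_def using cycm wcm nam bm by simp
  have mK: "m < K" using m less.prems by simp
  show BAD
  proof (rule core2[OF _ m(1) mK vm])
    show "\<And>ys j. length ys < length xs \<Longrightarrow> 1 \<le> j \<Longrightarrow> j < K \<Longrightarrow> violated_cycle (G j) w r ys \<Longrightarrow> BAD"
      using less.hyps by blast
    show "j0 < length xs" using j0 L_def by simp
    show "\<And>x y. G m x y \<Longrightarrow> w x y \<le> ew w xs j0" using G_weight mw by metis
  qed
qed

end

theorem corollary1:
  fixes N :: "'a set" and r :: 'a and w :: "'a \<Rightarrow> 'a \<Rightarrow> real"
  assumes "finite N" and "r \<notin> N"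
    and "\<And>x y. w x y = w y x"
  defines "V \<equiv> insert r N"
  defines "k \<equiv> card (weight_values V w)"
  shows "(\<forall>i. 1 \<le> i \<and> i < k \<longrightarrow>
            (\<forall>xs. \<not> bad_hole (Gadj V w i) r xs) \<and>
            (\<forall>a b c d. \<not> bad_diamond (Gadj V w i) w r a b c d))
     \<longleftrightarrow> (\<forall>i. 1 \<le> i \<and> i < k \<longrightarrow> (\<forall>xs. \<not> violated_cycle (Gadj V w i) w r xs))"
proof -
  interpret wg V w r
    by unfold_locales (use assms(1,3) in \<open>auto simp: V_def\<close>)
  have kK: "k = K" unfolding k_def by simp
  show ?thesis
  proof
    assume L: "\<forall>i. 1 \<le> i \<and> i < k \<longrightarrow>
            (\<forall>xs. \<not> bad_hole (Gadj V w i) r xs) \<and>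
            (\<forall>a b c d. \<not> bad_diamond (Gadj V w i) w r a b c d)"
    show "\<forall>i. 1 \<le> i \<and> i < k \<longrightarrow> (\<forall>xs. \<not> violated_cycle (Gadj V w i) w r xs)"
    proof (intro allI impI notI)
      fix i xs assume i: "1 \<le> i \<and> i < k" and v: "violated_cycle (Gadj V w i) w r xs"
      have BAD using core[of i xs] i v kK by simp
      then obtain j where j: "1 \<le> j" "j < K"
        "(\<exists>ys. bad_hole (G j) r ys) \<or> (\<exists>a b c d. bad_diamond (G j) w r a b c d)"
        unfolding BAD_def by blast
      then show False using L kK by blast
    qed
  next
    assume R: "\<forall>i. 1 \<le> i \<and> i < k \<longrightarrow> (\<forall>xs. \<not> violated_cycle (Gadj V w i) w r xs)"
    show "\<forall>i. 1 \<le> i \<and> i < k \<longrightarrow>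
            (\<forall>xs. \<not> bad_hole (Gadj V w i) r xs) \<and>
            (\<forall>a b c d. \<not> bad_diamond (Gadj V w i) w r a b c d)"
    proof (intro allI impI conjI notI)
      fix i xs assume i: "1 \<le> i \<and> i < k" and h: "bad_hole (Gadj V w i) r xs"
      have "violated_cycle (Gadj V w i) w r xs" by (rule hole_violated[OF h G_sym])
      then show False using R i by blast
    next
      fix i a b c d assume i: "1 \<le> i \<and> i < k" and h: "bad_diamond (Gadj V w i) w r a b c d"
      have "violated_cycle (Gadj V w i) w r [a, b, c, d]" by (rule diamond_violated[OF h])
      then show False using R i by blast
    qed
  qed
qed


end
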